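(* In every instance of the Balancing with Conflicts game with $m=2$ machines, every state $\vec s^*$ minimizing the social cost is a strong Nash equilibrium. In particular, a strong Nash equilibrium always exists and the strong price of stability equals $1$.
   Context: An instance of the Balancing with Conflicts (BwC) game consists of: - players $N=\{1,\dots,n\}$; - machines $M=\{1,\dots,m\}$; - a simple undirected graph $G=(N,E)$. A state is $\vec s\in M^n$, with $X_k(\vec s)=\{i:s_i=k\}$ and $x_k(\vec s)=|X_k(\vec s)|$. For $X\subseteq N$, $e(X)$ is the number of edges with both endpoints in $X$, and $e(\{i\},X)$ is the number of neighbours of $i$ in $X$. The cost of player $i$ with $s_i=k$ is $c_i(\vec s)=x_k(\vec s)+e(\{i\},X_k(\vec s))$. The social cost is $$c(\vec s)=\sum_ic_i(\vec s)=\sum_k\big(x_k(\vec s)^2+2e(X_k(\vec s))\big).$$ A state $\vec s$ is a strong Nash equilibrium if for every nonempty coalition $C\subseteq N$ and every joint deviation $\vec s_C'\in M^C$, some $i\in C$ has $c_i(\vec s)\le c_i(\vec s_C',\vec s_{-C})$. The strong price of stability is the minimum over strong Nash equilibria $\vec s$ of $c(\vec s)/\min_{\vec t}c(\vec t)$. *)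

theory Defs
  imports Complex_Main
begin

text \<open>States are maps s with s i \<in> M for i \<in> N
  (values outside N are irrelevant).\<close>

definition simple_graph :: "nat \<Rightarrow> nat set set \<Rightarrow> bool" where
  "simple_graph n E \<longleftrightarrow> (\<forall>e\<in>E. \<exists>i j. e = {i, j} \<and> i \<noteq> j \<and> i \<in> {1..n} \<and> j \<in> {1..n})"

definition is_state :: "nat \<Rightarrow> nat \<Rightarrow> (nat \<Rightarrow> nat) \<Rightarrow> bool" where
  "is_state n m s \<longleftrightarrow> (\<forall>i\<in>{1..n}. s i \<in> {1..m})"

definition machine_set :: "nat \<Rightarrow> (nat \<Rightarrow> nat) \<Rightarrow> nat \<Rightarrow> nat set" where
  "machine_set n s k = {i\<in>{1..n}. s i = k}"

definition load :: "nat \<Rightarrow> (nat \<Rightarrow> nat) \<Rightarrow> nat \<Rightarrow> nat" where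
  "load n s k = card (machine_set n s k)"

definition nbrs_in :: "nat set set \<Rightarrow> nat \<Rightarrow> nat set \<Rightarrow> nat" where
  "nbrs_in E i X = card {j\<in>X. {i, j} \<in> E}"

definition player_cost :: "nat \<Rightarrow> nat set set \<Rightarrow> (nat \<Rightarrow> nat) \<Rightarrow> nat \<Rightarrow> nat" where
  "player_cost n E s i = load n s (s i) + nbrs_in E i (machine_set n s (s i))"

definition social_cost :: "nat \<Rightarrow> nat set set \<Rightarrow> (nat \<Rightarrow> nat) \<Rightarrow> nat" where
  "social_cost n E s = (\<Sum>i\<in>{1..n}. player_cost n E s i)"

definition strong_NE :: "nat \<Rightarrow> nat \<Rightarrow> nat set set \<Rightarrow> (nat \<Rightarrow> nat) \<Rightarrow> bool" where
  "strong_NE n m E s \<longleftrightarrow> is_state n m s \<and>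
     (\<forall>C t. C \<subseteq> {1..n} \<and> C \<noteq> {} \<and> is_state n m t \<and> (\<forall>i\<in>{1..n} - C. t i = s i)
        \<longrightarrow> (\<exists>i\<in>C. player_cost n E s i \<le> player_cost n E t i))"

definition opt_cost :: "nat \<Rightarrow> nat \<Rightarrow> nat set set \<Rightarrow> nat" where
  "opt_cost n m E = Min {social_cost n E t | t. is_state n m t}"

definition strong_PoS :: "nat \<Rightarrow> nat \<Rightarrow> nat set set \<Rightarrow> real" where
  "strong_PoS n m E = Min {real (social_cost n E s) / real (opt_cost n m E) | s. strong_NE n m E s}"

end

theory Submission
  imports Defs
begin

definition ww :: "nat set set \<Rightarrow> nat \<Rightarrow> nat \<Rightarrow> nat" where
  "ww E i j = 1 + (if {i,j} \<in> E then 1 else 0)"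

lemma ww_sym: "ww E i j = ww E j i"
  unfolding ww_def by (simp add: insert_commute)

lemma pc_sum: "player_cost n E s i = (\<Sum>j\<in>{1..n}. if s j = s i then ww E i j else 0)"
proof -
  have a: "load n s (s i) = (\<Sum>j\<in>{1..n}. if s j = s i then 1 else 0)"
    unfolding load_def machine_set_def by (simp add: sum.inter_filter[symmetric])
  have b: "{j \<in> machine_set n s (s i). {i, j} \<in> E} = {j\<in>{1..n}. s j = s i \<and> {i,j} \<in> E}"
    unfolding machine_set_def by auto
  have c: "nbrs_in E i (machine_set n s (s i)) = (\<Sum>j\<in>{1..n}. if s j = s i \<and> {i,j} \<in> E then 1 else 0)"
    unfolding nbrs_in_def b by (simp add: sum.inter_filter[symmetric])
  show ?thesis unfolding player_cost_def a c ww_def sum.distrib[symmetric]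
    by (rule sum.cong) auto
qed

lemma key:
  assumes s: "is_state n 2 s" and t: "is_state n 2 t"
  shows "int (social_cost n E t) - int (social_cost n E s)
     = 2 * (\<Sum>i\<in>{i\<in>{1..n}. t i \<noteq> s i}. int (player_cost n E t i) - int (player_cost n E s i))"
proof -
  define N where "N = {1..n}"
  define D where "D = {i\<in>{1..n}. t i \<noteq> s i}"
  define g where "g i j = int (if t j = t i then ww E i j else 0) - int (if s j = s i then ww E i j else 0)" for i j
  have fN: "finite N" and fD: "finite D" and DN: "D \<subseteq> N" unfolding N_def D_def by auto
  have pc: "int (player_cost n E t i) - int (player_cost n E s i) = (\<Sum>j\<in>N. g i j)" for i
    unfolding pc_sum g_def N_def by (simp add: sum_subtractf)
  have sym: "g i j = g j i" for i j unfolding g_def by (simp add: ww_sym eq_commute)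
  have zero: "g i j = 0" if "i \<in> N" "j \<in> N" "(i \<in> D) = (j \<in> D)" for i j
  proof -
    have "s i \<in> {1,2}" "s j \<in> {1,2}" "t i \<in> {1,2}" "t j \<in> {1,2}"
      using s t that(1,2) unfolding is_state_def N_def by fastforce+
    moreover have "(t i = s i) = (t j = s j)" using that unfolding D_def N_def by auto
    ultimately have "(t j = t i) = (s j = s i)" by auto
    thus ?thesis unfolding g_def by simp
  qed
  have L: "int (social_cost n E t) - int (social_cost n E s) = (\<Sum>i\<in>N. \<Sum>j\<in>N. g i j)"
    unfolding social_cost_def N_def[symmetric] using pc by (simp add: sum_subtractf[symmetric])
  have split: "(\<Sum>i\<in>N. h i) = (\<Sum>i\<in>D. h i) + (\<Sum>i\<in>N-D. h i)" for h :: "nat \<Rightarrow> int"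
    using sum.subset_diff[OF DN fN, of h] by (simp add: add.commute)
  have A: "(\<Sum>j\<in>N. g i j) = (\<Sum>j\<in>N-D. g i j)" if "i \<in> D" for i
    using split[of "g i"] zero[of i] that DN by (simp add: subset_iff)
  have B: "(\<Sum>j\<in>N. g i j) = (\<Sum>j\<in>D. g i j)" if "i \<in> N - D" for i
  proof -
    have "(\<Sum>j\<in>N-D. g i j) = 0" using zero[of i] that by (intro sum.neutral) auto
    thus ?thesis using split[of "g i"] by simp
  qed
  have C: "(\<Sum>i\<in>N-D. \<Sum>j\<in>D. g i j) = (\<Sum>i\<in>D. \<Sum>j\<in>N-D. g i j)"
    by (subst sum.swap) (simp add: sym)
  have "(\<Sum>i\<in>N. \<Sum>j\<in>N. g i j) = (\<Sum>i\<in>D. \<Sum>j\<in>N-D. g i j) + (\<Sum>i\<in>N-D. \<Sum>j\<in>D. g i j)"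
    using split[of "\<lambda>i. \<Sum>j\<in>N. g i j"] A B by simp
  also have "\<dots> = 2 * (\<Sum>i\<in>D. \<Sum>j\<in>N. g i j)" using C A by simp
  finally show ?thesis using L pc D_def by simp
qed

lemma opt_is_SNE:
  assumes s: "is_state n 2 s" and opt: "\<forall>t. is_state n 2 t \<longrightarrow> social_cost n E s \<le> social_cost n E t"
  shows "strong_NE n 2 E s"
  unfolding strong_NE_def
proof (intro conjI allI impI)
  show "is_state n 2 s" by fact
  fix C t assume h: "C \<subseteq> {1..n} \<and> C \<noteq> {} \<and> is_state n 2 t \<and> (\<forall>i\<in>{1..n} - C. t i = s i)"
  show "\<exists>i\<in>C. player_cost n E s i \<le> player_cost n E t i"
  proof (rule ccontr)
    assume "\<not> ?thesis"
    hence lt: "\<And>i. i \<in> C \<Longrightarrow> player_cost n E t i < player_cost n E s i" by auto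
    define D where "D = {i\<in>{1..n}. t i \<noteq> s i}"
    have DC: "D \<subseteq> C" using h unfolding D_def by auto
    show False
    proof (cases "D = {}")
      case True
      obtain i where i: "i \<in> C" using h by auto
      have "\<forall>j\<in>{1..n}. t j = s j" using True unfolding D_def by auto
      moreover have "t i = s i" using i h True unfolding D_def by auto
      ultimately have "player_cost n E t i = player_cost n E s i" unfolding pc_sum
        by (intro sum.cong) auto
      thus False using lt[OF i] by simp
    next
      case False
      have fD: "finite D" unfolding D_def by auto
      have "(\<Sum>i\<in>D. int (player_cost n E t i) - int (player_cost n E s i)) < 0"
        using sum_strict_mono[OF fD False, of "\<lambda>i. int (player_cost n E t i) - int (player_cost n E s i)" "\<lambda>_. 0"]
          lt DC by auto
      hence "int (social_cost n E t) < int (social_cost n E s)"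
        using key[OF s, of t E] h unfolding D_def by linarith
      thus False using opt h by force
    qed
  qed
qed

lemma pc_bound: "player_cost n E s i \<le> 2 * n"
proof -
  have "player_cost n E s i \<le> (\<Sum>j\<in>{1..n}. 2)" unfolding pc_sum
    by (intro sum_mono) (auto simp: ww_def)
  thus ?thesis by simp
qed

lemma sc_bound: "social_cost n E s \<le> n * (2 * n)"
proof -
  have "social_cost n E s \<le> (\<Sum>i\<in>{1..n}. 2 * n)" unfolding social_cost_def
    by (intro sum_mono pc_bound)
  thus ?thesis by simp
qed

lemma sc_pos: assumes "n \<ge> 1" shows "social_cost n E s \<ge> 1"
proof -
  have "1 \<le> ww E 1 1" by (simp add: ww_def)
  also have "\<dots> \<le> player_cost n E s 1" unfolding pc_sum
    using member_le_sum[of 1 "{1..n}" "\<lambda>j. if s j = s 1 then ww E 1 j else 0"] assms by simp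
  also have "\<dots> \<le> social_cost n E s" unfolding social_cost_def
    using member_le_sum[of 1 "{1..n}" "player_cost n E s"] assms by simp
  finally show ?thesis .
qed

theorem theorem13:
  fixes n :: nat and E :: "nat set set"
  assumes "n \<ge> 1" and "simple_graph n E"
  shows "(\<forall>s. is_state n 2 s \<and> (\<forall>t. is_state n 2 t \<longrightarrow> social_cost n E s \<le> social_cost n E t)
            \<longrightarrow> strong_NE n 2 E s)
         \<and> (\<exists>s. strong_NE n 2 E s)
         \<and> strong_PoS n 2 E = 1"
proof -
  have P1: "\<forall>s. is_state n 2 s \<and> (\<forall>t. is_state n 2 t \<longrightarrow> social_cost n E s \<le> social_cost n E t)
            \<longrightarrow> strong_NE n 2 E s" using opt_is_SNE by blast
  have "is_state n 2 (\<lambda>_. 1)" unfolding is_state_def by auto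
  then obtain s0 where s0: "is_state n 2 s0"
    and m: "\<forall>t. is_state n 2 t \<longrightarrow> social_cost n E s0 \<le> social_cost n E t"
    using ex_has_least_nat[of "is_state n 2" "\<lambda>_. 1" "social_cost n E"] by blast
  have sne: "strong_NE n 2 E s0" using P1 s0 m by blast
  have fin: "finite {social_cost n E t | t. is_state n 2 t}"
    by (rule finite_subset[of _ "{..n*(2*n)}"]) (auto simp: sc_bound)
  have opt: "opt_cost n 2 E = social_cost n E s0"
    unfolding opt_cost_def by (rule Min_eqI[OF fin]) (use m s0 in auto)
  have op: "real (opt_cost n 2 E) > 0" using opt sc_pos[OF assms(1), of E s0] by simp
  have finR: "finite {real (social_cost n E s) / real (opt_cost n 2 E) | s. strong_NE n 2 E s}"
    by (rule finite_subset[of _ "(\<lambda>k. real k / real (opt_cost n 2 E)) ` {..n*(2*n)}"])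
      (auto simp: sc_bound)
  have "strong_PoS n 2 E = 1"
    unfolding strong_PoS_def
  proof (rule Min_eqI[OF finR])
    fix y assume "y \<in> {real (social_cost n E s) / real (opt_cost n 2 E) | s. strong_NE n 2 E s}"
    then obtain s where y: "y = real (social_cost n E s) / real (opt_cost n 2 E)" and "strong_NE n 2 E s" by auto
    hence "is_state n 2 s" unfolding strong_NE_def by auto
    hence "real (opt_cost n 2 E) \<le> real (social_cost n E s)" using m opt by simp
    thus "1 \<le> y" using op y by simp
  next
    show "1 \<in> {real (social_cost n E s) / real (opt_cost n 2 E) | s. strong_NE n 2 E s}"
      using sne op opt by (intro CollectI exI[of _ s0]) simp
  qed
  thus ?thesis using P1 sne by blast
qed

end
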